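(* Let $G$ be a nontrivial finite $p$-group of nilpotency class $c$. In the bar code of the degree-$2$ lower central persistence module of $G$, every interval $[a,b]$ with $a<b$ has $a=1$. Equivalently, for every $2\le k\le c-1$... more precisely, for every $1\le k<l\le c$ the image of $H_2(Q_k,\mathbb F_p)\to H_2(Q_l,\mathbb F_p)$ equals the image of $H_2(G,\mathbb F_p)\to H_2(Q_l,\mathbb F_p)$.
   Context: Lower central series: $L_1(G)=G$, $L_{i+1}(G)=[L_i(G),G]$, so $L_{c+1}(G)=1\ne L_c(G)$. For $k=1,\dots,c$ set $Q_k=G/L_{c+2-k}(G)$ (so $Q_1=G$, $Q_c=G/L_2(G)$). The degree-$n$ lower central persistence module of $G$ is the sequence of $\mathbb F_p$-linear maps $V_1\to V_2\to\cdots\to V_c$ with $V_k=H_n(Q_k,\mathbb F_p)$ and maps induced by the natural surjections $Q_k\to Q_{k+1}$. Such a module decomposes, uniquely up to isomorphism and order, as a direct sum of interval modules $I[a,b]$ ($1\le a\le b\le c$), where $I[a,b]$ has $\mathbb F_p$ in positions $a,\dots,b$, identity maps between consecutive positions in this range, and $0$ elsewhere. The bar code is the multiset of intervals $[a,b]$ occurring in this decomposition. *)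

theory Defs
  imports "HOL-Algebra.Coset" "HOL-Algebra.Generated_Groups" "Berlekamp_Zassenhaus.Finite_Field"
begin

text \<open>lcs G n is the (n+1)-st term L_(n+1)(G): lcs G 0 = G, lcs G (n+1) = [lcs G n, G].\<close>
primrec lcs :: "('a, 'b) monoid_scheme \<Rightarrow> nat \<Rightarrow> 'a set" where
  "lcs G 0 = carrier G"
| "lcs G (Suc n) = generate G {x \<otimes>\<^bsub>G\<^esub> y \<otimes>\<^bsub>G\<^esub> inv\<^bsub>G\<^esub> x \<otimes>\<^bsub>G\<^esub> inv\<^bsub>G\<^esub> y | x y. x \<in> lcs G n \<and> y \<in> carrier G}"

text \<open>Paper indexing: L G i = L_i(G) for i \<ge> 1.\<close>
definition L :: "('a, 'b) monoid_scheme \<Rightarrow> nat \<Rightarrow> 'a set" where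
  "L G i = lcs G (i - 1)"

definition Q :: "('a, 'b) monoid_scheme \<Rightarrow> nat \<Rightarrow> nat \<Rightarrow> 'a set monoid" where
  "Q G c k = G Mod (L G (c + 2 - k))"

text \<open>The natural surjection Q_k -> Q_l (k \<le> l) sends the coset N x to N' x = N' N x.\<close>
definition qmap :: "('a, 'b) monoid_scheme \<Rightarrow> nat \<Rightarrow> nat \<Rightarrow> 'a set \<Rightarrow> 'a set" where
  "qmap G c l S = L G (c + 2 - l) <#>\<^bsub>G\<^esub> S"

definition gmap :: "('a, 'b) monoid_scheme \<Rightarrow> nat \<Rightarrow> nat \<Rightarrow> 'a \<Rightarrow> 'a set" where
  "gmap G c l x = L G (c + 2 - l) #>\<^bsub>G\<^esub> x"

text \<open>Coefficients in the field 'p mod_ring = F_p (p = CARD('p) prime). An n-chain is a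
  function from n-tuples (lists of length n) of group elements to F_p, zero outside
  such tuples: i.e. an element of F_p[G^n] = C_n(G) (x)_{ZG} F_p of the bar resolution.\<close>

definition tuples :: "('a, 'b) monoid_scheme \<Rightarrow> nat \<Rightarrow> 'a list set" where
  "tuples H n = {xs. length xs = n \<and> set xs \<subseteq> carrier H}"

definition chains :: "('a, 'b) monoid_scheme \<Rightarrow> nat \<Rightarrow> ('a list \<Rightarrow> 'p::prime_card mod_ring) set" where
  "chains H n = {c. \<forall>xs. c xs \<noteq> 0 \<longrightarrow> xs \<in> tuples H n}"

definition face :: "('a, 'b) monoid_scheme \<Rightarrow> 'a list \<Rightarrow> nat \<Rightarrow> 'a list" where
  "face H xs i =
    (if i = 0 then tl xs
     else if i = length xs then butlast xs
     else take (i - 1) xs @ [xs ! (i - 1) \<otimes>\<^bsub>H\<^esub> xs ! i] @ drop (i + 1) xs)"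

text \<open>Boundary d_n : C_n \<rightarrow> C_(n-1), d[g1|..|gn] = \<Sum>_(i=0..n) (-1)^i face_i (trivial action).\<close>
definition bdry :: "('a, 'b) monoid_scheme \<Rightarrow> nat \<Rightarrow> ('a list \<Rightarrow> 'p::prime_card mod_ring) \<Rightarrow> ('a list \<Rightarrow> 'p mod_ring)" where
  "bdry H n c = (\<lambda>ys. \<Sum>xs\<in>tuples H n. c xs *
       (\<Sum>i\<in>{0..n}. (-1) ^ i * (if face H xs i = ys then 1 else 0)))"

definition cycles :: "('a, 'b) monoid_scheme \<Rightarrow> nat \<Rightarrow> ('a list \<Rightarrow> 'p::prime_card mod_ring) set" where
  "cycles H n = {c \<in> chains H n. bdry H n c = (\<lambda>_. 0)}"

definition boundaries :: "('a, 'b) monoid_scheme \<Rightarrow> nat \<Rightarrow> ('a list \<Rightarrow> 'p::prime_card mod_ring) set" where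
  "boundaries H n = bdry H (Suc n) ` chains H (Suc n)"

definition pushforward :: "('a, 'b) monoid_scheme \<Rightarrow> ('a \<Rightarrow> 'c) \<Rightarrow> nat \<Rightarrow> ('a list \<Rightarrow> 'p::prime_card mod_ring) \<Rightarrow> ('c list \<Rightarrow> 'p mod_ring)" where
  "pushforward H f n c = (\<lambda>ys. \<Sum>xs\<in>{xs \<in> tuples H n. map f xs = ys}. c xs)"

text \<open>Image of H_n(H;F_p) \<rightarrow> H_n(K;F_p) induced by f, represented by its full preimage
  in the cycle space Z_n(K) (i.e. f_*(Z_n(H)) + B_n(K)); two images in H_n(K) = Z_n/B_n
  coincide iff these preimages coincide.\<close>
definition hom_image :: "('a, 'b) monoid_scheme \<Rightarrow> ('c, 'd) monoid_scheme \<Rightarrow> ('a \<Rightarrow> 'c) \<Rightarrow> nat \<Rightarrow> ('c list \<Rightarrow> 'p::prime_card mod_ring) set" where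
  "hom_image H K f n = {(\<lambda>ys. z ys + b ys) | z b. z \<in> pushforward H f n ` cycles H n \<and> b \<in> boundaries K n}"

end

theory Submission
  imports Defs "HOL-Library.Function_Algebras"
begin


definition dl :: "'x list \<Rightarrow> 'x list \<Rightarrow> 'p::prime_card mod_ring" where
  "dl a = (\<lambda>ys. if a = ys then 1 else 0)"

definition kop :: "'x list set \<Rightarrow> ('x list \<Rightarrow> 'y list \<Rightarrow> 'p::prime_card mod_ring)
   \<Rightarrow> ('x list \<Rightarrow> 'p mod_ring) \<Rightarrow> ('y list \<Rightarrow> 'p mod_ring)" where
  "kop T k c = (\<lambda>ys. \<Sum>xs\<in>T. c xs * k xs ys)"

definition bk :: "('a, 'b) monoid_scheme \<Rightarrow> nat \<Rightarrow> 'a list \<Rightarrow> 'a list \<Rightarrow> 'p::prime_card mod_ring" where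
  "bk H n xs = (\<lambda>ys. \<Sum>i\<in>{0..n}. (-1) ^ i * dl (face H xs i) ys)"

definition subsp :: "('y \<Rightarrow> 'p::prime_card mod_ring) set \<Rightarrow> bool" where
  "subsp S \<longleftrightarrow> 0 \<in> S \<and> (\<forall>a\<in>S. \<forall>b\<in>S. a + b \<in> S) \<and> (\<forall>r. \<forall>a\<in>S. (\<lambda>y. r * a y) \<in> S)"

lemma subsp_zero: "subsp S \<Longrightarrow> 0 \<in> S" by (simp add: subsp_def)
lemma subsp_add: "subsp S \<Longrightarrow> a \<in> S \<Longrightarrow> b \<in> S \<Longrightarrow> a + b \<in> S" by (simp add: subsp_def)
lemma subsp_smul: "subsp S \<Longrightarrow> a \<in> S \<Longrightarrow> (\<lambda>y. r * a y) \<in> S" by (simp add: subsp_def)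
lemma subsp_uminus: assumes "subsp S" "a \<in> S" shows "- a \<in> S"
proof -
  have "(\<lambda>y. (-1) * a y) \<in> S" using subsp_smul[OF assms] .
  moreover have "(\<lambda>y. (-1) * a y) = - a" by (rule ext) simp
  ultimately show ?thesis by simp
qed
lemma subsp_diff: assumes "subsp S" "a \<in> S" "b \<in> S" shows "a - b \<in> S"
  using subsp_add[OF assms(1,2) subsp_uminus[OF assms(1,3)]] by simp

lemma kop_empty[simp]: "kop {} k c = 0"
  by (simp add: kop_def zero_fun_def)

lemma kop_insert: "finite F \<Longrightarrow> x \<notin> F \<Longrightarrow> kop (insert x F) k c = (\<lambda>ys. c x * k x ys) + kop F k c"
  by (rule ext) (simp add: kop_def)

lemma kop_in_subsp:
  assumes "finite T" "subsp S" "\<And>xs. xs \<in> T \<Longrightarrow> k xs \<in> S"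
  shows "kop T k c \<in> S"
  using assms
proof (induction T rule: finite_induct)
  case empty then show ?case using subsp_zero[of S] by (simp add: zero_fun_def)
next
  case (insert x F)
  show ?case unfolding kop_insert[OF insert(1,2)]
    by (rule subsp_add[OF insert(4) subsp_smul[OF insert(4)]]) (use insert in auto)
qed

lemma kop_add: "kop T k (a + b) = kop T k a + kop T k b"
  by (rule ext) (simp add: kop_def sum.distrib algebra_simps)
lemma kop_diff: "kop T k (a - b) = kop T k a - kop T k b"
  by (rule ext) (simp add: kop_def sum_subtractf algebra_simps)
lemma kop_zero[simp]: "kop T k 0 = 0"
  by (rule ext) (simp add: kop_def)
lemma kop_kdiff: "kop T (\<lambda>xs. k1 xs - k2 xs) c = kop T k1 c - kop T k2 c"
  by (rule ext) (simp add: kop_def sum_subtractf algebra_simps)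
lemma kop_cong: "(\<And>xs. xs \<in> T \<Longrightarrow> k xs = k' xs) \<Longrightarrow> kop T k c = kop T k' c"
  by (rule ext) (simp add: kop_def)

lemma kop_comp:
  "kop T2 k2 (kop T1 k1 c) = kop T1 (\<lambda>xs ys. \<Sum>zs\<in>T2. k1 xs zs * k2 zs ys) c"
  by (rule ext) (simp add: kop_def sum_distrib_right sum_distrib_left mult.assoc sum.swap[of _ T2])

lemma dl_collapse: "finite T \<Longrightarrow> a \<in> T \<Longrightarrow> (\<Sum>zs\<in>T. dl a zs * f zs) = f a"
proof -
  assume "finite T" "a \<in> T"
  have "(\<Sum>zs\<in>T. dl a zs * f zs) = (\<Sum>zs\<in>T. if a = zs then f zs else 0)"
    by (rule sum.cong) (auto simp: dl_def)
  then show ?thesis using \<open>finite T\<close> \<open>a \<in> T\<close> by (simp add: sum.delta')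
qed

lemma kop_dl: "finite T \<Longrightarrow> xs \<in> T \<Longrightarrow> kop T k (dl xs) = k xs"
proof (rule ext)
  fix ys assume "finite T" "xs \<in> T"
  have "(\<Sum>x\<in>T. dl xs x * k x ys) = k xs ys" by (rule dl_collapse) fact+
  then show "kop T k (dl xs) ys = k xs ys" by (simp add: kop_def)
qed

lemma finite_tuples: "finite (carrier H) \<Longrightarrow> finite (tuples H n)"
proof -
  assume "finite (carrier H)"
  then have "finite {xs. set xs \<subseteq> carrier H \<and> length xs = n}" by (rule finite_lists_length_eq)
  then show ?thesis unfolding tuples_def by (rule rev_finite_subset) auto
qed

lemma bdry_kop: "bdry H n c = kop (tuples H n) (bk H n) c"
  by (simp add: bdry_def kop_def bk_def dl_def sum_distrib_left mult.assoc cong: if_cong)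

lemma push_kop: "finite (carrier H) \<Longrightarrow> pushforward H f n c = kop (tuples H n) (\<lambda>xs. dl (map f xs)) c"
  by (rule ext) (simp add: pushforward_def kop_def dl_def sum.inter_filter finite_tuples if_distrib cong: if_cong)

lemma subsp_chains: "subsp (chains H n)"
  unfolding subsp_def chains_def
  apply (auto simp: zero_fun_def)
  subgoal for a b xs by (cases "a xs = 0") auto
  done

lemma dl_chains: "a \<in> tuples H n \<Longrightarrow> dl a \<in> chains H n"
  by (simp add: chains_def dl_def)

lemma kop_id: "finite (carrier H) \<Longrightarrow> c \<in> chains H n \<Longrightarrow> kop (tuples H n) dl c = c"
proof (rule ext)
  fix ys assume f: "finite (carrier H)" and c: "c \<in> chains H n"
  have "kop (tuples H n) dl c ys = (\<Sum>xs\<in>tuples H n. if xs = ys then c xs else 0)"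
    by (simp add: kop_def dl_def if_distrib cong: if_cong)
  also have "\<dots> = c ys" using c f by (auto simp: sum.delta finite_tuples chains_def)
  finally show "kop (tuples H n) dl c ys = c ys" .
qed



lemma subsp_sum:
  assumes "finite I" "subsp S" "\<And>i. i \<in> I \<Longrightarrow> g i \<in> S"
  shows "(\<lambda>y. \<Sum>i\<in>I. g i y) \<in> S"
  using assms
proof (induction I rule: finite_induct)
  case empty then show ?case using subsp_zero[of S] by (simp add: zero_fun_def)
next
  case (insert x F)
  have "(\<lambda>y. \<Sum>i\<in>insert x F. g i y) = g x + (\<lambda>y. \<Sum>i\<in>F. g i y)"
    using insert(1,2) by (auto simp: fun_eq_iff)
  then show ?case using insert by (simp add: subsp_add)
qed

lemma face_tuples:
  assumes "group H" "xs \<in> tuples H n" "i \<le> n" "0 < n"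
  shows "face H xs i \<in> tuples H (n - 1)"
proof -
  have len: "length xs = n" and st: "set xs \<subseteq> carrier H" using assms(2) by (auto simp: tuples_def)
  show ?thesis
  proof (cases "i = 0")
    case True
    have "set (tl xs) \<subseteq> set xs" by (cases xs) auto
    moreover have "face H xs i = tl xs" using True by (simp add: face_def)
    ultimately show ?thesis using len st unfolding tuples_def by auto
  next
    case False
    show ?thesis
    proof (cases "i = n")
      case True
      have "face H xs i = butlast xs" using True False len by (simp add: face_def)
      moreover have "set (butlast xs) \<subseteq> set xs" by (rule in_set_butlastD[THEN subsetI])
      ultimately show ?thesis using len st unfolding tuples_def by auto
    next
      case F2: False
      have lt: "i - 1 < length xs" "i < length xs" using False F2 assms(3) len by auto
      then have c: "xs ! (i - 1) \<otimes>\<^bsub>H\<^esub> xs ! i \<in> carrier H"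
      proof -
        have "xs ! (i - 1) \<in> carrier H" "xs ! i \<in> carrier H" using lt st nth_mem by blast+
        then show ?thesis by (rule monoid.m_closed[OF group.is_monoid[OF assms(1)]])
      qed
      have e: "face H xs i = take (i - 1) xs @ [xs ! (i - 1) \<otimes>\<^bsub>H\<^esub> xs ! i] @ drop (i + 1) xs"
        using False F2 len by (simp add: face_def)
      have "set (take (i - 1) xs) \<subseteq> carrier H" by (rule order_trans[OF set_take_subset st])
      moreover have "set (drop (i + 1) xs) \<subseteq> carrier H" by (rule order_trans[OF set_drop_subset st])
      ultimately have "set (face H xs i) \<subseteq> carrier H" unfolding e using c by simp
      moreover have "length (face H xs i) = n - 1" unfolding e using lt len False by simp
      ultimately show ?thesis unfolding tuples_def by simp
    qed
  qed
qed

lemma face_map: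
  assumes "xs \<in> tuples H n" "i \<le> n"
    and hom: "\<forall>x\<in>carrier H. \<forall>y\<in>carrier H. f (x \<otimes>\<^bsub>H\<^esub> y) = f x \<otimes>\<^bsub>K\<^esub> f y"
  shows "map f (face H xs i) = face K (map f xs) i"
proof -
  have len: "length xs = n" and st: "set xs \<subseteq> carrier H" using assms(1) by (auto simp: tuples_def)
  show ?thesis
  proof (cases "i = 0 \<or> i = n")
    case True then show ?thesis using len by (auto simp: face_def map_tl map_butlast)
  next
    case False
    have "i - 1 < length xs" "i < length xs" using False assms(2) len by auto
    then have "xs ! (i - 1) \<in> carrier H" "xs ! i \<in> carrier H" using st nth_mem by blast+
    then show ?thesis using False len \<open>i < length xs\<close> hom
      by (auto simp: face_def take_map drop_map)
  qed
qed

lemma map_tuples: "\<forall>x\<in>carrier H. f x \<in> carrier K \<Longrightarrow> xs \<in> tuples H n \<Longrightarrow> map f xs \<in> tuples K n"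
  by (auto simp: tuples_def)

lemma bk_chains:
  assumes "group H" "xs \<in> tuples H n" "0 < n"
  shows "bk H n xs \<in> chains H (n - 1)"
  unfolding bk_def
  by (rule subsp_sum[OF _ subsp_chains]) (auto intro!: subsp_smul[OF subsp_chains] dl_chains simp: face_tuples[OF assms(1,2) _ assms(3), simplified])

lemma bdry_chains:
  assumes "group H" "finite (carrier H)" "0 < n"
  shows "bdry H n c \<in> chains H (n - 1)"
  unfolding bdry_kop
  by (rule kop_in_subsp[OF finite_tuples[OF assms(2)] subsp_chains]) (rule bk_chains[OF assms(1) _ assms(3)])

lemma push_chains:
  assumes "finite (carrier H)" "\<forall>x\<in>carrier H. f x \<in> carrier K"
  shows "pushforward H f n c \<in> chains K n"
  unfolding push_kop[OF assms(1)]
  by (rule kop_in_subsp[OF finite_tuples[OF assms(1)] subsp_chains]) (rule dl_chains, rule map_tuples[OF assms(2)])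

lemma chain_map:
  assumes "group H" "finite (carrier H)" "finite (carrier K)"
    and fc: "\<forall>x\<in>carrier H. f x \<in> carrier K"
    and hom: "\<forall>x\<in>carrier H. \<forall>y\<in>carrier H. f (x \<otimes>\<^bsub>H\<^esub> y) = f x \<otimes>\<^bsub>K\<^esub> f y"
    and n: "0 < n"
  shows "bdry K n (pushforward H f n c) = pushforward H f (n - 1) (bdry H n c)"
proof -
  have fT: "finite (tuples K n)" "finite (tuples H (n - 1))" using assms finite_tuples by auto
  have "bdry K n (pushforward H f n c) = kop (tuples H n) (\<lambda>xs. bk K n (map f xs)) c"
    unfolding bdry_kop push_kop[OF assms(2)] kop_comp
    by (rule kop_cong, rule ext, rule dl_collapse[OF fT(1) map_tuples[OF fc]])
  also have "\<dots> = pushforward H f (n - 1) (bdry H n c)"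
    unfolding bdry_kop push_kop[OF assms(2)] kop_comp
  proof (rule kop_cong, rule ext)
    fix xs ys assume xs: "xs \<in> tuples H n"
    have "(\<Sum>zs\<in>tuples H (n - 1). bk H n xs zs * dl (map f zs) ys)
       = (\<Sum>i = 0..n. (-1) ^ i * (\<Sum>zs\<in>tuples H (n - 1). dl (face H xs i) zs * dl (map f zs) ys))"
      unfolding bk_def sum_distrib_right sum_distrib_left
      by (subst sum.swap) (simp add: mult.assoc)
    also have "\<dots> = (\<Sum>i = 0..n. (-1) ^ i * dl (face K (map f xs) i) ys)"
      by (rule sum.cong[OF refl], subst dl_collapse[OF fT(2) face_tuples[OF assms(1) xs _ n]])
         (auto simp: face_map[OF xs _ hom])
    finally have calc: "(\<Sum>zs\<in>tuples H (n - 1). bk H n xs zs * dl (map f zs) ys) = bk K n (map f xs) ys"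
      by (simp add: bk_def)
    then show "bk K n (map f xs) ys = (\<Sum>zs\<in>tuples H (n - 1). bk H n xs zs * dl (map f zs) ys)"
      by (rule sym)
  qed
  finally show ?thesis .
qed

lemma push_comp:
  assumes "finite (carrier H)" "finite (carrier K)" "\<forall>x\<in>carrier H. f x \<in> carrier K"
  shows "pushforward K g n (pushforward H f n c) = pushforward H (g \<circ> f) n c"
  unfolding push_kop[OF assms(1)] push_kop[OF assms(2)] kop_comp
  by (rule kop_cong, rule ext, subst dl_collapse[OF finite_tuples[OF assms(2)] map_tuples[OF assms(3)]]) simp_all

lemma push_cong:
  assumes "finite (carrier H)" "\<forall>x\<in>carrier H. f x = g x"
  shows "pushforward H f n c = pushforward H g n c"
  unfolding push_kop[OF assms(1)]
  by (rule kop_cong) (use assms(2) in \<open>auto simp: tuples_def intro!: arg_cong[of _ _ dl] map_cong\<close>)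

lemma push_id:
  assumes "finite (carrier H)" "\<forall>x\<in>carrier H. f x = x" "c \<in> chains H n"
  shows "pushforward H f n c = c"
proof -
  have "pushforward H f n c = kop (tuples H n) dl c"
    unfolding push_kop[OF assms(1)]
    by (rule kop_cong) (use assms(2) in \<open>auto simp: tuples_def intro!: arg_cong[of _ _ dl] map_idI\<close>)
  then show ?thesis using kop_id[OF assms(1,3)] by simp
qed

lemma bdry_dl: "finite (carrier H) \<Longrightarrow> xs \<in> tuples H n \<Longrightarrow> bdry H n (dl xs) = bk H n xs"
  unfolding bdry_kop by (rule kop_dl[OF finite_tuples])

lemma push_dl: "finite (carrier H) \<Longrightarrow> xs \<in> tuples H n \<Longrightarrow> pushforward H f n (dl xs) = dl (map f xs)"
  unfolding push_kop by (rule kop_dl[OF finite_tuples])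

lemma bk2: "bk H 2 [a, b] = dl [b] - dl [a \<otimes>\<^bsub>H\<^esub> b] + dl [a]"
  by (rule ext) (simp add: bk_def face_def numeral_2_eq_2)

lemma bk3: "bk H 3 [a, b, c] = dl [b, c] - dl [a \<otimes>\<^bsub>H\<^esub> b, c] + dl [a, b \<otimes>\<^bsub>H\<^esub> c] - dl [a, b]"
  by (rule ext) (simp add: bk_def face_def numeral_3_eq_3)

lemma kop_smul: "kop T k (\<lambda>y. r * a y) = (\<lambda>ys. r * kop T k a ys)"
  by (rule ext) (simp add: kop_def sum_distrib_left mult.assoc)

lemma push_diff: "finite (carrier H) \<Longrightarrow> pushforward H f n (a - b) = pushforward H f n a - pushforward H f n b"
  by (simp add: push_kop kop_diff)
lemma push_add: "finite (carrier H) \<Longrightarrow> pushforward H f n (a + b) = pushforward H f n a + pushforward H f n b"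
  by (simp add: push_kop kop_add)
lemma bdry_diff: "bdry H n (a - b) = bdry H n a - bdry H n b"
  by (simp add: bdry_kop kop_diff)
lemma bdry_add: "bdry H n (a + b) = bdry H n a + bdry H n b"
  by (simp add: bdry_kop kop_add)

lemma subsp_boundaries: "subsp (boundaries K n :: ('c list \<Rightarrow> 'p::prime_card mod_ring) set)"
  unfolding subsp_def boundaries_def
proof (intro conjI ballI allI)
  have "bdry K (Suc n) 0 = (0 :: 'c list \<Rightarrow> 'p mod_ring)" by (simp only: bdry_kop kop_zero)
  moreover have "(0::'c list \<Rightarrow> 'p mod_ring) \<in> chains K (Suc n)" by (rule subsp_zero[OF subsp_chains])
  ultimately show "(0 :: 'c list \<Rightarrow> 'p mod_ring) \<in> bdry K (Suc n) ` chains K (Suc n)"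
    by (intro image_eqI[where x=0]) auto
next
  fix a b :: "'c list \<Rightarrow> 'p mod_ring" assume "a \<in> bdry K (Suc n) ` chains K (Suc n)" "b \<in> bdry K (Suc n) ` chains K (Suc n)"
  then obtain a' b' where ab: "a' \<in> chains K (Suc n)" "b' \<in> chains K (Suc n)" "a = bdry K (Suc n) a'" "b = bdry K (Suc n) b'" by auto
  have "a + b = bdry K (Suc n) (a' + b')" unfolding ab(3,4) by (rule bdry_add[symmetric])
  moreover have "a' + b' \<in> chains K (Suc n)" by (rule subsp_add[OF subsp_chains ab(1,2)])
  ultimately show "a + b \<in> bdry K (Suc n) ` chains K (Suc n)" by (rule image_eqI)
next
  fix r and a :: "'c list \<Rightarrow> 'p mod_ring" assume "a \<in> bdry K (Suc n) ` chains K (Suc n)"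
  then obtain a' where a: "a' \<in> chains K (Suc n)" "a = bdry K (Suc n) a'" by auto
  have "(\<lambda>y. r * a y) = bdry K (Suc n) (\<lambda>y. r * a' y)" unfolding a(2) bdry_kop by (rule kop_smul[symmetric])
  moreover have "(\<lambda>y. r * a' y) \<in> chains K (Suc n)" by (rule subsp_smul[OF subsp_chains a(1)])
  ultimately show "(\<lambda>y. r * a y) \<in> bdry K (Suc n) ` chains K (Suc n)" by (rule image_eqI)
qed

lemma bk_boundaries: "finite (carrier K) \<Longrightarrow> xs \<in> tuples K (Suc n) \<Longrightarrow> bk K (Suc n) xs \<in> boundaries K n"
  unfolding boundaries_def by (rule image_eqI[of _ _ "dl xs"]) (auto simp: bdry_dl dl_chains)



lemma (in group) inv_cancel_left': "g \<in> carrier G \<Longrightarrow> z \<in> carrier G \<Longrightarrow> inv g \<otimes> (g \<otimes> z) = z"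
  by (simp add: m_assoc[symmetric])

lemma (in group) conj_commutator:
  assumes "x \<in> carrier G" "y \<in> carrier G" "g \<in> carrier G"
  shows "g \<otimes> (x \<otimes> y \<otimes> inv x \<otimes> inv y) \<otimes> inv g
       = (g \<otimes> x \<otimes> inv g) \<otimes> (g \<otimes> y \<otimes> inv g) \<otimes> inv (g \<otimes> x \<otimes> inv g) \<otimes> inv (g \<otimes> y \<otimes> inv g)"
  using assms by (simp add: inv_mult_group m_assoc inv_cancel_left')

lemma lcs_normal: fixes G (structure) assumes "group G" shows "lcs G n \<lhd> G"
proof (induction n)
  case 0 then show ?case using group.normal_self[OF assms] by simp
next
  case (Suc n)
  interpret group G by fact
  let ?X = "{x \<otimes> y \<otimes> inv x \<otimes> inv y | x y. x \<in> lcs G n \<and> y \<in> carrier G}"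
  have sub: "lcs G n \<subseteq> carrier G" using Suc normal_imp_subgroup subgroup.subset by blast
  have Xc: "?X \<subseteq> carrier G" using sub by auto
  have "generate G ?X \<lhd> G"
  proof (rule normal_generateI[OF Xc])
    fix h g assume h: "h \<in> ?X" and g: "g \<in> carrier G"
    then obtain x y where xy: "h = x \<otimes> y \<otimes> inv x \<otimes> inv y" "x \<in> lcs G n" "y \<in> carrier G" by blast
    have x: "x \<in> carrier G" using xy sub by auto
    have "g \<otimes> x \<otimes> inv g \<in> lcs G n" using normal_invE(2)[OF Suc.IH g xy(2)] .
    moreover have "g \<otimes> y \<otimes> inv g \<in> carrier G" using g xy by simp
    ultimately show "g \<otimes> h \<otimes> inv g \<in> ?X"
      unfolding xy(1) conj_commutator[OF x xy(3) g] by blast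
  qed
  then show ?case by simp
qed

lemma lcs_Suc_sub: fixes G (structure) assumes "group G" shows "lcs G (Suc n) \<subseteq> lcs G n"
proof -
  interpret group G by fact
  interpret N: normal "lcs G n" G by (rule lcs_normal[OF assms])
  show ?thesis unfolding lcs.simps(2)
  proof (rule generate_subgroup_incl[OF _ N.subgroup_axioms], safe)
    fix x y assume x: "x \<in> lcs G n" and y: "y \<in> carrier G"
    have xc: "x \<in> carrier G" using x N.subset by auto
    have "y \<otimes> inv x \<otimes> inv y \<in> lcs G n" using N.inv_op_closed2[OF y, of "inv x"] x by simp
    then have "x \<otimes> (y \<otimes> inv x \<otimes> inv y) \<in> lcs G n" using x by (simp add: N.m_closed)
    then show "x \<otimes> y \<otimes> inv x \<otimes> inv y \<in> lcs G n" using xc y by (simp add: m_assoc)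
  qed
qed

lemma lcs_antimono: "group G \<Longrightarrow> i \<le> j \<Longrightarrow> lcs G j \<subseteq> lcs G i"
  by (rule lift_Suc_antimono_le[of "lcs G", OF lcs_Suc_sub])



lemma subsp_image:
  fixes Z :: "('c list \<Rightarrow> 'p::prime_card mod_ring) set"
  assumes "subsp Z"
  shows "subsp (bdry H n ` Z)"
  unfolding subsp_def
proof (intro conjI ballI allI)
  have "bdry H n 0 = (0 :: 'c list \<Rightarrow> 'p mod_ring)" by (simp only: bdry_kop kop_zero)
  moreover have "(0::'c list \<Rightarrow> 'p mod_ring) \<in> Z" by (rule subsp_zero[OF assms])
  ultimately show "(0 :: 'c list \<Rightarrow> 'p mod_ring) \<in> bdry H n ` Z"
    by (intro image_eqI[where x=0]) auto
next
  fix a b :: "'c list \<Rightarrow> 'p mod_ring" assume "a \<in> bdry H n ` Z" "b \<in> bdry H n ` Z"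
  then obtain a' b' where ab: "a' \<in> Z" "b' \<in> Z" "a = bdry H n a'" "b = bdry H n b'" by auto
  have "a + b = bdry H n (a' + b')" unfolding ab(3,4) by (rule bdry_add[symmetric])
  moreover have "a' + b' \<in> Z" by (rule subsp_add[OF assms ab(1,2)])
  ultimately show "a + b \<in> bdry H n ` Z" by (rule image_eqI)
next
  fix r and a :: "'c list \<Rightarrow> 'p mod_ring" assume "a \<in> bdry H n ` Z"
  then obtain a' where a: "a' \<in> Z" "a = bdry H n a'" by auto
  have "(\<lambda>y. r * a y) = bdry H n (\<lambda>y. r * a' y)" unfolding a(2) bdry_kop by (rule kop_smul[symmetric])
  moreover have "(\<lambda>y. r * a' y) \<in> Z" by (rule subsp_smul[OF assms a(1)])
  ultimately show "(\<lambda>y. r * a y) \<in> bdry H n ` Z" by (rule image_eqI)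
qed

lemma subsp_pre:
  fixes B :: "('c list \<Rightarrow> 'p::prime_card mod_ring) set"
  assumes fin: "finite (carrier H)" and B: "subsp B"
  shows "subsp {u \<in> chains H n. pushforward H f n u \<in> B}"
  unfolding subsp_def
proof (intro conjI ballI allI)
  have "pushforward H f n 0 = (0 :: 'c list \<Rightarrow> 'p mod_ring)" by (simp only: push_kop[OF fin] kop_zero)
  then show "0 \<in> {u \<in> chains H n. pushforward H f n u \<in> B}"
    using subsp_zero[OF B] subsp_zero[OF subsp_chains, of H n] by simp
next
  fix a b assume a: "a \<in> {u \<in> chains H n. pushforward H f n u \<in> B}" and b: "b \<in> {u \<in> chains H n. pushforward H f n u \<in> B}"
  then show "a + b \<in> {u \<in> chains H n. pushforward H f n u \<in> B}"
    by (simp add: push_add[OF fin] subsp_add[OF B] subsp_add[OF subsp_chains])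
next
  fix r a assume a: "a \<in> {u \<in> chains H n. pushforward H f n u \<in> B}"
  have "pushforward H f n (\<lambda>y. r * a y) = (\<lambda>y. r * pushforward H f n a y)"
    by (simp only: push_kop[OF fin] kop_smul)
  then show "(\<lambda>y. r * a y) \<in> {u \<in> chains H n. pushforward H f n u \<in> B}"
    using a by (simp add: subsp_smul[OF B] subsp_smul[OF subsp_chains])
qed

locale lcsetup =
  fixes G :: "('a, 'b) monoid_scheme" (structure) and M N :: "'a set" and pty :: "'p::prime_card itself"
  assumes grp: "group G" and fin: "finite (carrier G)" and nM: "M \<lhd> G" and nN: "N \<lhd> G"
    and MN: "M \<subseteq> generate G {x \<otimes> y \<otimes> inv x \<otimes> inv y | x y. x \<in> N \<and> y \<in> carrier G}"
begin

sublocale group G by (rule grp)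
sublocale M: normal M G by (rule nM)
sublocale N: normal N G by (rule nN)

abbreviation dG :: "'a list \<Rightarrow> 'a list \<Rightarrow> 'p mod_ring" where "dG \<equiv> dl"
abbreviation dQ :: "'a set list \<Rightarrow> 'a set list \<Rightarrow> 'p mod_ring" where "dQ \<equiv> dl"

definition sig :: "'a \<Rightarrow> 'a set" where "sig x = N #> x"
definition pi :: "'a \<Rightarrow> 'a set" where "pi x = M #> x"
definition rho :: "'a set \<Rightarrow> 'a set" where "rho S = N <#> S"
definition sec :: "'a set \<Rightarrow> 'a" where "sec X = (SOME x. x \<in> carrier G \<and> pi x = X)"

lemma finQ: "finite (carrier (G Mod H))"
  by (simp add: FactGroup_def RCOSETS_def fin)

lemma gQM: "group (G Mod M)" by (rule M.factorgroup_is_group)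
lemma gQN: "group (G Mod N)" by (rule N.factorgroup_is_group)

lemma commN: "x \<in> N \<Longrightarrow> y \<in> carrier G \<Longrightarrow> x \<otimes> y \<otimes> inv x \<otimes> inv y \<in> N"
proof -
  assume x: "x \<in> N" and y: "y \<in> carrier G"
  have xc: "x \<in> carrier G" using x N.subset by auto
  have "y \<otimes> inv x \<otimes> inv y \<in> N" using N.inv_op_closed2[OF y, of "inv x"] x by simp
  then have "x \<otimes> (y \<otimes> inv x \<otimes> inv y) \<in> N" using x by (simp add: N.m_closed)
  then show "x \<otimes> y \<otimes> inv x \<otimes> inv y \<in> N" using xc y by (simp add: m_assoc)
qed

lemma genN: "generate G {x \<otimes> y \<otimes> inv x \<otimes> inv y | x y. x \<in> N \<and> y \<in> carrier G} \<subseteq> N"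
  by (rule generate_subgroup_incl[OF _ N.subgroup_axioms]) (auto intro: commN)

lemma MsubN: "M \<subseteq> N" using MN genN by blast

lemma NM: "N <#> M = N"
proof
  show "N <#> M \<subseteq> N" using MsubN unfolding set_mult_def by (auto intro: N.m_closed)
  show "N \<subseteq> N <#> M"
  proof
    fix n assume n: "n \<in> N"
    have "n = n \<otimes> \<one>" using n N.subset by auto
    then show "n \<in> N <#> M" using n M.one_closed unfolding set_mult_def by blast
  qed
qed

lemma pi_c: "x \<in> carrier G \<Longrightarrow> pi x \<in> carrier (G Mod M)"
  by (simp add: FactGroup_def pi_def rcosetsI M.subset)
lemma sig_c: "x \<in> carrier G \<Longrightarrow> sig x \<in> carrier (G Mod N)"
  by (simp add: FactGroup_def sig_def rcosetsI N.subset)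
lemma pi_hom: "x \<in> carrier G \<Longrightarrow> y \<in> carrier G \<Longrightarrow> pi (x \<otimes> y) = pi x \<otimes>\<^bsub>G Mod M\<^esub> pi y"
  by (simp add: FactGroup_def pi_def M.rcos_sum)
lemma sig_hom: "x \<in> carrier G \<Longrightarrow> y \<in> carrier G \<Longrightarrow> sig (x \<otimes> y) = sig x \<otimes>\<^bsub>G Mod N\<^esub> sig y"
  by (simp add: FactGroup_def sig_def N.rcos_sum)
lemma sig_N: "n \<in> N \<Longrightarrow> sig n = N"
  unfolding sig_def by (rule coset_join2) (use N.subset N.subgroup_axioms in auto)
lemma sig_one: "sig \<one> = N"
  unfolding sig_def using N.subset by simp

lemma QM_car: "X \<in> carrier (G Mod M) \<Longrightarrow> \<exists>x\<in>carrier G. pi x = X"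
  by (auto simp: FactGroup_def RCOSETS_def pi_def)

lemma rho_pi: "x \<in> carrier G \<Longrightarrow> rho (pi x) = sig x"
  unfolding rho_def pi_def sig_def
  by (simp add: setmult_rcos_assoc[OF N.subset M.subset] NM)

lemma rho_c: "X \<in> carrier (G Mod M) \<Longrightarrow> rho X \<in> carrier (G Mod N)"
proof -
  assume "X \<in> carrier (G Mod M)"
  then obtain x where x: "x \<in> carrier G" "pi x = X" using QM_car by blast
  then show ?thesis using rho_pi[OF x(1)] sig_c[OF x(1)] by simp
qed

lemma sec_c: assumes "X \<in> carrier (G Mod M)" shows "sec X \<in> carrier G" "pi (sec X) = X"
proof -
  have "\<exists>x. x \<in> carrier G \<and> pi x = X" using QM_car[OF assms] by blast
  then have "sec X \<in> carrier G \<and> pi (sec X) = X" unfolding sec_def by (rule someI_ex)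
  then show "sec X \<in> carrier G" "pi (sec X) = X" by auto
qed

end


context lcsetup begin

abbreviation BQ :: "('a set list \<Rightarrow> 'p mod_ring) set" where "BQ \<equiv> boundaries (G Mod N) 2"

definition Z :: "('a list \<Rightarrow> 'p mod_ring) set" where
  "Z = {u \<in> chains G 2. pushforward G sig 2 u \<in> BQ}"
definition DZ :: "('a list \<Rightarrow> 'p mod_ring) set" where "DZ = bdry G 2 ` Z"

lemma subsp_Z: "subsp Z"
  unfolding Z_def by (rule subsp_pre[OF fin subsp_boundaries])
lemma subsp_DZ: "subsp DZ"
  unfolding DZ_def by (rule subsp_image[OF subsp_Z])

lemma tup2: "a \<in> carrier G \<Longrightarrow> b \<in> carrier G \<Longrightarrow> [a, b] \<in> tuples G 2"
  by (simp add: tuples_def)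

lemma bdry2: "a \<in> carrier G \<Longrightarrow> b \<in> carrier G \<Longrightarrow> bdry G 2 (dG [a, b]) = dG [b] - dG [a \<otimes> b] + dG [a]"
  by (simp add: bdry_dl[OF fin tup2] bk2)

lemma push2: "a \<in> carrier G \<Longrightarrow> b \<in> carrier G \<Longrightarrow> pushforward G sig 2 (dG [a, b]) = dQ [sig a, sig b]"
  by (simp add: push_dl[OF fin tup2])

lemma bk3Q:
  assumes "a \<in> carrier G" "b \<in> carrier G" "c \<in> carrier G"
  shows "dQ [sig b, sig c] - dQ [sig (a \<otimes> b), sig c] + dQ [sig a, sig (b \<otimes> c)] - dQ [sig a, sig b]
     \<in> BQ"
proof -
  have t: "[sig a, sig b, sig c] \<in> tuples (G Mod N) (Suc 2)" using assms sig_c by (simp add: tuples_def)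
  have "bk (G Mod N) (Suc 2) [sig a, sig b, sig c] \<in> BQ"
    by (rule bk_boundaries[OF finQ t])
  moreover have "bk (G Mod N) (Suc 2) [sig a, sig b, sig c] =
     dQ [sig b, sig c] - dQ [sig (a \<otimes> b), sig c] + dQ [sig a, sig (b \<otimes> c)] - dQ [sig a, sig b]"
    using bk3[of "G Mod N" "sig a" "sig b" "sig c"] assms by (simp add: sig_hom numeral_3_eq_3)
  ultimately show ?thesis by simp
qed

lemma dl2_chains: "a \<in> carrier G \<Longrightarrow> b \<in> carrier G \<Longrightarrow> dG [a, b] \<in> chains G 2"
  by (rule dl_chains[OF tup2])

lemma K1: assumes a: "a \<in> carrier G" and b: "b \<in> N" shows "dG [a, b] - dG [\<one>, \<one>] \<in> Z"
proof -
  have bc: "b \<in> carrier G" using b N.subset by auto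
  have "dQ [sig \<one>, sig \<one>] - dQ [sig (a \<otimes> \<one>), sig \<one>] + dQ [sig a, sig (\<one> \<otimes> \<one>)] - dQ [sig a, sig \<one>]
     \<in> BQ" by (rule bk3Q) (use a in auto)
  then have "- (dQ [N, N] - dQ [sig a, N] + dQ [sig a, N] - dQ [sig a, N]) \<in> BQ"
    using a by (simp add: sig_one subsp_uminus[OF subsp_boundaries] del: minus_diff_eq)
  moreover have "pushforward G sig 2 (dG [a, b] - dG [\<one>, \<one>]) = - (dQ [N, N] - dQ [sig a, N] + dQ [sig a, N] - dQ [sig a, N])"
    using a bc by (simp add: push_diff[OF fin] push2 sig_N[OF b] sig_one algebra_simps)
  moreover have "dG [a, b] - dG [\<one>, \<one>] \<in> chains G 2"
    using a bc by (intro subsp_diff[OF subsp_chains] dl2_chains) auto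
  ultimately show ?thesis unfolding Z_def by simp
qed

end


context lcsetup begin

lemma K2: assumes a: "a \<in> N" and b: "b \<in> carrier G" shows "dG [a, b] - dG [\<one>, \<one>] \<in> Z"
proof -
  have ac: "a \<in> carrier G" using a N.subset by auto
  have "dQ [sig \<one>, sig b] - dQ [sig (\<one> \<otimes> \<one>), sig b] + dQ [sig \<one>, sig (\<one> \<otimes> b)] - dQ [sig \<one>, sig \<one>]
     \<in> BQ" by (rule bk3Q) (use b in auto)
  then have "dQ [N, sig b] - dQ [N, sig b] + dQ [N, sig b] - dQ [N, N] \<in> BQ"
    using b by (simp add: sig_one)
  moreover have "pushforward G sig 2 (dG [a, b] - dG [\<one>, \<one>]) = dQ [N, sig b] - dQ [N, sig b] + dQ [N, sig b] - dQ [N, N]"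
    using ac b by (simp add: push_diff[OF fin] push2 sig_N[OF a] sig_one)
  moreover have "dG [a, b] - dG [\<one>, \<one>] \<in> chains G 2"
    using ac b by (intro subsp_diff[OF subsp_chains] dl2_chains) auto
  ultimately show ?thesis unfolding Z_def by simp
qed

lemma K3: assumes y: "y \<in> carrier G" and n: "n \<in> N"
  shows "dG [y, inv y] - dG [y, n] - dG [y \<otimes> n, inv y] + dG [\<one>, \<one>] \<in> Z"
proof -
  have nc: "n \<in> carrier G" using n N.subset by auto
  have syn: "sig (y \<otimes> n) = sig y"
  proof -
    have "sig (y \<otimes> n) = sig y \<otimes>\<^bsub>G Mod N\<^esub> sig \<one>" using sig_hom[OF y nc] sig_N[OF n] sig_one by simp
    also have "\<dots> = sig y" using sig_hom[OF y one_closed] y by simp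
    finally show ?thesis .
  qed
  have "dQ [sig \<one>, sig \<one>] - dQ [sig (y \<otimes> \<one>), sig \<one>] + dQ [sig y, sig (\<one> \<otimes> \<one>)] - dQ [sig y, sig \<one>]
     \<in> BQ" by (rule bk3Q) (use y in auto)
  then have "dQ [N, N] - dQ [sig y, N] + dQ [sig y, N] - dQ [sig y, N] \<in> BQ"
    using y by (simp add: sig_one)
  moreover have "pushforward G sig 2 (dG [y, inv y] - dG [y, n] - dG [y \<otimes> n, inv y] + dG [\<one>, \<one>])
      = dQ [N, N] - dQ [sig y, N] + dQ [sig y, N] - dQ [sig y, N]"
    using y nc by (simp add: push_diff[OF fin] push_add[OF fin] push2 sig_N[OF n] sig_one syn)
  moreover have "dG [y, inv y] - dG [y, n] - dG [y \<otimes> n, inv y] + dG [\<one>, \<one>] \<in> chains G 2"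
    using y nc by (intro subsp_add[OF subsp_chains] subsp_diff[OF subsp_chains] dl2_chains) auto
  ultimately show ?thesis unfolding Z_def by simp
qed

lemma inDZ: "u \<in> Z \<Longrightarrow> bdry G 2 u \<in> DZ" by (simp add: DZ_def)

lemma D_P: assumes a: "a \<in> carrier G" and b: "b \<in> N"
  shows "dG [a \<otimes> b] - dG [\<one>] - (dG [a] - dG [\<one>]) - (dG [b] - dG [\<one>]) \<in> DZ"
proof -
  have bc: "b \<in> carrier G" using b N.subset by auto
  have "- bdry G 2 (dG [a, b] - dG [\<one>, \<one>]) \<in> DZ"
    by (rule subsp_uminus[OF subsp_DZ inDZ[OF K1[OF a b]]])
  moreover have "- bdry G 2 (dG [a, b] - dG [\<one>, \<one>]) = dG [a \<otimes> b] - dG [\<one>] - (dG [a] - dG [\<one>]) - (dG [b] - dG [\<one>])"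
    using a bc by (simp add: bdry_diff bdry2)
  ultimately show ?thesis by simp
qed

lemma D_C: assumes y: "y \<in> carrier G" and n: "n \<in> N"
  shows "dG [y \<otimes> n \<otimes> inv y] - dG [n] \<in> DZ"
proof -
  have nc: "n \<in> carrier G" using n N.subset by auto
  have "bdry G 2 (dG [y, inv y] - dG [y, n] - dG [y \<otimes> n, inv y] + dG [\<one>, \<one>]) \<in> DZ"
    by (rule inDZ[OF K3[OF y n]])
  moreover have "bdry G 2 (dG [y, inv y] - dG [y, n] - dG [y \<otimes> n, inv y] + dG [\<one>, \<one>]) = dG [y \<otimes> n \<otimes> inv y] - dG [n]"
    using y nc by (simp add: bdry_diff bdry_add bdry2)
  ultimately show ?thesis by simp
qed

lemma D_coset: assumes m: "m \<in> N" and r: "r \<in> carrier G"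
  shows "dG [m \<otimes> r] - dG [r] - (dG [m] - dG [\<one>]) \<in> DZ"
proof -
  have mc: "m \<in> carrier G" using m N.subset by auto
  have "- bdry G 2 (dG [m, r] - dG [\<one>, \<one>]) \<in> DZ"
    by (rule subsp_uminus[OF subsp_DZ inDZ[OF K2[OF m r]]])
  moreover have "- bdry G 2 (dG [m, r] - dG [\<one>, \<one>]) = dG [m \<otimes> r] - dG [r] - (dG [m] - dG [\<one>])"
    using mc r by (simp add: bdry_diff bdry2)
  ultimately show ?thesis by simp
qed

end


context lcsetup begin

definition S :: "'a set" where "S = {m \<in> carrier G. dG [m] - dG [\<one>] \<in> DZ}"

lemma gen_S: assumes x: "x \<in> N" and y: "y \<in> carrier G" shows "x \<otimes> y \<otimes> inv x \<otimes> inv y \<in> S"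
proof -
  have xc: "x \<in> carrier G" using x N.subset by auto
  define t where "t = y \<otimes> inv x \<otimes> inv y"
  have t: "t \<in> N" unfolding t_def using N.inv_op_closed2[OF y, of "inv x"] x by simp
  have tc: "t \<in> carrier G" using t N.subset by auto
  have h: "x \<otimes> y \<otimes> inv x \<otimes> inv y = x \<otimes> t" unfolding t_def using xc y by (simp add: m_assoc)
  have E1: "dG [x \<otimes> t] - dG [\<one>] - (dG [x] - dG [\<one>]) - (dG [t] - dG [\<one>]) \<in> DZ"
    by (rule D_P[OF xc t])
  have "dG [inv x \<otimes> x] - dG [\<one>] - (dG [inv x] - dG [\<one>]) - (dG [x] - dG [\<one>]) \<in> DZ"
    by (rule D_P[OF _ x]) (use xc in simp)
  then have E2: "dG [\<one>] - dG [\<one>] - (dG [inv x] - dG [\<one>]) - (dG [x] - dG [\<one>]) \<in> DZ"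
    using xc by simp
  have E3: "dG [y \<otimes> inv x \<otimes> inv y] - dG [inv x] \<in> DZ"
    by (rule D_C[OF y]) (use x in simp)
  have "(dG [x \<otimes> t] - dG [\<one>] - (dG [x] - dG [\<one>]) - (dG [t] - dG [\<one>]))
        - (dG [\<one>] - dG [\<one>] - (dG [inv x] - dG [\<one>]) - (dG [x] - dG [\<one>]))
        + (dG [y \<otimes> inv x \<otimes> inv y] - dG [inv x]) \<in> DZ"
    by (intro subsp_add[OF subsp_DZ] subsp_diff[OF subsp_DZ] E1 E2 E3)
  moreover have "(dG [x \<otimes> t] - dG [\<one>] - (dG [x] - dG [\<one>]) - (dG [t] - dG [\<one>]))
        - (dG [\<one>] - dG [\<one>] - (dG [inv x] - dG [\<one>]) - (dG [x] - dG [\<one>]))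
        + (dG [y \<otimes> inv x \<otimes> inv y] - dG [inv x]) = dG [x \<otimes> t] - dG [\<one>]"
    unfolding t_def by (simp add: algebra_simps)
  ultimately show ?thesis unfolding S_def h using xc tc by simp
qed

lemma generate_S: "h \<in> generate G {x \<otimes> y \<otimes> inv x \<otimes> inv y | x y. x \<in> N \<and> y \<in> carrier G} \<Longrightarrow> h \<in> S"
proof (induction h rule: generate.induct)
  case one
  then show ?case unfolding S_def using subsp_zero[OF subsp_DZ] by simp
next
  case (incl h)
  then show ?case using gen_S by blast
next
  case (inv h)
  then obtain x y where xy: "h = x \<otimes> y \<otimes> inv x \<otimes> inv y" "x \<in> N" "y \<in> carrier G" by blast
  have hS: "h \<in> S" using gen_S xy by blast
  have hN: "h \<in> N" using commN xy by blast
  have hc: "h \<in> carrier G" using hS S_def by auto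
  have "dG [inv h \<otimes> h] - dG [\<one>] - (dG [inv h] - dG [\<one>]) - (dG [h] - dG [\<one>]) \<in> DZ"
    by (rule D_P[OF _ hN]) (use hc in simp)
  then have E: "dG [\<one>] - dG [\<one>] - (dG [inv h] - dG [\<one>]) - (dG [h] - dG [\<one>]) \<in> DZ"
    using hc by simp
  have "- (dG [\<one>] - dG [\<one>] - (dG [inv h] - dG [\<one>]) - (dG [h] - dG [\<one>])) - (dG [h] - dG [\<one>]) \<in> DZ"
    by (rule subsp_diff[OF subsp_DZ subsp_uminus[OF subsp_DZ E]]) (use hS in \<open>simp add: S_def\<close>)
  moreover have "- (dG [\<one>] - dG [\<one>] - (dG [inv h] - dG [\<one>]) - (dG [h] - dG [\<one>])) - (dG [h] - dG [\<one>])
     = dG [inv h] - dG [\<one>]" by (simp add: algebra_simps)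
  ultimately show ?case unfolding S_def using hc by simp
next
  case (eng h1 h2)
  have h2N: "h2 \<in> N" using eng(2) genN by blast
  have h1c: "h1 \<in> carrier G" using eng(3) S_def by auto
  have h2c: "h2 \<in> carrier G" using eng(4) S_def by auto
  have "(dG [h1 \<otimes> h2] - dG [\<one>] - (dG [h1] - dG [\<one>]) - (dG [h2] - dG [\<one>])) + (dG [h1] - dG [\<one>]) + (dG [h2] - dG [\<one>]) \<in> DZ"
    using eng(3,4) unfolding S_def by (intro subsp_add[OF subsp_DZ] D_P[OF h1c h2N]) auto
  moreover have "(dG [h1 \<otimes> h2] - dG [\<one>] - (dG [h1] - dG [\<one>]) - (dG [h2] - dG [\<one>])) + (dG [h1] - dG [\<one>]) + (dG [h2] - dG [\<one>])
     = dG [h1 \<otimes> h2] - dG [\<one>]" by (simp add: algebra_simps)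
  ultimately show ?case unfolding S_def using h1c h2c by simp
qed

lemma M_S: "M \<subseteq> S" using MN generate_S by blast

lemma D_g: assumes g: "g \<in> carrier G" shows "dG [g] - dG [sec (pi g)] \<in> DZ"
proof -
  define r where "r = sec (pi g)"
  have r: "r \<in> carrier G" "pi r = pi g" unfolding r_def using sec_c[OF pi_c[OF g]] by auto
  have "g \<in> M #> g" using rcos_self[OF g M.subgroup_axioms] .
  then have "g \<in> M #> r" using r(2) by (simp add: pi_def)
  then have m: "g \<otimes> inv r \<in> M" using M.rcos_module_imp[OF grp r(1)] by simp
  define m where "m = g \<otimes> inv r"
  have mM: "m \<in> M" using m m_def by simp
  have gmr: "g = m \<otimes> r" unfolding m_def using g r(1) by (simp add: m_assoc)
  have "dG [m \<otimes> r] - dG [r] - (dG [m] - dG [\<one>]) + (dG [m] - dG [\<one>]) \<in> DZ"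
    using mM M_S MsubN r(1) unfolding S_def by (intro subsp_add[OF subsp_DZ] D_coset) auto
  then show ?thesis unfolding r_def[symmetric] using gmr by simp
qed

end


context lcsetup begin

lemma key:
  fixes d :: "'a list \<Rightarrow> 'p mod_ring"
  assumes d: "d \<in> chains G 1" and pd: "pushforward G pi 1 d = 0"
  shows "d \<in> DZ"
proof -
  have finT: "finite (tuples G 1)" by (rule finite_tuples[OF fin])
  have pic: "\<forall>x\<in>carrier G. pi x \<in> carrier (G Mod M)" using pi_c by blast
  have "pushforward G (sec \<circ> pi) 1 d = pushforward (G Mod M) sec 1 (pushforward G pi 1 d)"
    by (rule push_comp[symmetric, OF fin finQ pic])
  also have "\<dots> = 0" unfolding pd by (simp only: push_kop[OF finQ] kop_zero)
  finally have z: "kop (tuples G 1) (\<lambda>xs. dl (map (sec \<circ> pi) xs)) d = 0"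
    by (simp add: push_kop[OF fin])
  have "d = kop (tuples G 1) dl d - kop (tuples G 1) (\<lambda>xs. dl (map (sec \<circ> pi) xs)) d"
    using kop_id[OF fin d] z by simp
  also have "\<dots> = kop (tuples G 1) (\<lambda>xs. dl xs - dl (map (sec \<circ> pi) xs)) d"
    by (rule kop_kdiff[symmetric])
  also have "\<dots> \<in> DZ"
  proof (rule kop_in_subsp[OF finT subsp_DZ])
    fix xs assume "xs \<in> tuples G 1"
    then obtain g where g: "xs = [g]" "g \<in> carrier G" by (auto simp: tuples_def length_Suc_conv)
    show "dG xs - dG (map (sec \<circ> pi) xs) \<in> DZ" using D_g[OF g(2)] g(1) by simp
  qed
  finally show ?thesis .
qed

lemma main: "(hom_image (G Mod M) (G Mod N) rho 2 :: ('a set list \<Rightarrow> 'p mod_ring) set) = hom_image G (G Mod N) sig 2"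
proof
  have pic: "\<forall>x\<in>carrier G. pi x \<in> carrier (G Mod M)" using pi_c by blast
  have sec1: "\<forall>X\<in>carrier (G Mod M). sec X \<in> carrier G" using sec_c by blast
  have pih: "\<forall>x\<in>carrier G. \<forall>y\<in>carrier G. pi (x \<otimes> y) = pi x \<otimes>\<^bsub>G Mod M\<^esub> pi y" using pi_hom by blast
  show "(hom_image (G Mod M) (G Mod N) rho 2 :: ('a set list \<Rightarrow> 'p mod_ring) set) \<subseteq> hom_image G (G Mod N) sig 2"
  proof
    fix x :: "'a set list \<Rightarrow> 'p mod_ring"
    assume "x \<in> hom_image (G Mod M) (G Mod N) rho 2"
    then obtain z b where x: "x = (\<lambda>ys. pushforward (G Mod M) rho 2 z ys + b ys)"
      and z: "z \<in> cycles (G Mod M) 2" and b: "b \<in> BQ"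
      unfolding hom_image_def by blast
    have zc: "z \<in> chains (G Mod M) 2" and zb: "bdry (G Mod M) 2 z = 0"
      using z by (auto simp: cycles_def zero_fun_def)
    define w where "w = pushforward (G Mod M) sec 2 z"
    have wc: "w \<in> chains G 2" unfolding w_def by (rule push_chains[OF finQ sec1])
    define d where "d = bdry G 2 w"
    have dc: "d \<in> chains G 1" unfolding d_def using bdry_chains[OF grp fin, of 2 w] by simp
    have pw: "pushforward G pi 2 w = z"
      unfolding w_def push_comp[OF finQ fin sec1]
      by (rule push_id[OF finQ _ zc]) (simp add: sec_c)
    have "pushforward G pi 1 d = bdry (G Mod M) 2 (pushforward G pi 2 w)"
      unfolding d_def using chain_map[OF grp fin finQ pic pih, of 2 w] by simp
    then have pd: "pushforward G pi 1 d = 0" using pw zb by simp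
    have "d \<in> DZ" by (rule key[OF dc pd])
    then obtain v where v: "v \<in> Z" "bdry G 2 v = d" unfolding DZ_def by blast
    have vc: "v \<in> chains G 2" and vB: "pushforward G sig 2 v \<in> BQ" using v(1) by (auto simp: Z_def)
    have cyc: "w - v \<in> cycles G 2"
      using subsp_diff[OF subsp_chains wc vc] v(2) unfolding cycles_def d_def
      by (simp add: bdry_diff zero_fun_def[symmetric])
    have ps: "pushforward G sig 2 w = pushforward (G Mod M) rho 2 z"
      unfolding w_def push_comp[OF finQ fin sec1]
      by (rule push_cong[OF finQ]) (auto simp: sec_c rho_pi[symmetric])
    have bb: "pushforward G sig 2 v + b \<in> BQ" by (rule subsp_add[OF subsp_boundaries vB b])
    have "x = (\<lambda>ys. pushforward G sig 2 (w - v) ys + (pushforward G sig 2 v + b) ys)"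
      unfolding x ps[symmetric] push_diff[OF fin] by (simp add: fun_eq_iff)
    then show "x \<in> hom_image G (G Mod N) sig 2"
      unfolding hom_image_def using cyc bb by blast
  qed
  show "hom_image G (G Mod N) sig 2 \<subseteq> (hom_image (G Mod M) (G Mod N) rho 2 :: ('a set list \<Rightarrow> 'p mod_ring) set)"
  proof
    fix x :: "'a set list \<Rightarrow> 'p mod_ring"
    assume "x \<in> hom_image G (G Mod N) sig 2"
    then obtain z b where x: "x = (\<lambda>ys. pushforward G sig 2 z ys + b ys)"
      and z: "z \<in> cycles G 2" and b: "b \<in> BQ"
      unfolding hom_image_def by blast
    have zc: "z \<in> chains G 2" and zb: "bdry G 2 z = 0"
      using z by (auto simp: cycles_def zero_fun_def)
    define z' where "z' = pushforward G pi 2 z"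
    have z'c: "z' \<in> chains (G Mod M) 2" unfolding z'_def by (rule push_chains[OF fin pic])
    have "bdry (G Mod M) 2 z' = pushforward G pi 1 (bdry G 2 z)"
      unfolding z'_def using chain_map[OF grp fin finQ pic pih, of 2 z] by simp
    also have "\<dots> = 0" unfolding zb by (simp only: push_kop[OF fin] kop_zero)
    finally have cz: "z' \<in> cycles (G Mod M) 2" using z'c by (simp add: cycles_def zero_fun_def)
    have eq: "pushforward (G Mod M) rho 2 z' = pushforward G sig 2 z"
      unfolding z'_def push_comp[OF fin finQ pic]
      by (rule push_cong[OF fin]) (auto simp: rho_pi)
    have "pushforward G sig 2 z \<in> pushforward (G Mod M) rho 2 ` cycles (G Mod M) 2"
      by (rule image_eqI[where f="pushforward (G Mod M) rho 2", OF eq[symmetric] cz])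
    then show "x \<in> hom_image (G Mod M) (G Mod N) rho 2"
      unfolding hom_image_def x using b by blast
  qed
qed

end


theorem proposition3:
  fixes G :: "('a, 'b) monoid_scheme" and c :: nat
  assumes "group G"
    and "finite (carrier G)"
    and "\<exists>m\<ge>1. card (carrier G) = CARD('p::prime_card) ^ m"
    and "L G (c + 1) = {\<one>\<^bsub>G\<^esub>}"
    and "L G c \<noteq> {\<one>\<^bsub>G\<^esub>}"
  shows "\<forall>k l. 1 \<le> k \<and> k < l \<and> l \<le> c \<longrightarrow>
           (hom_image (Q G c k) (Q G c l) (qmap G c l) 2 :: ('a set list \<Rightarrow> 'p mod_ring) set)
             = hom_image G (Q G c l) (gmap G c l) 2"
proof (intro allI impI)
  fix k l assume kl: "1 \<le> k \<and> k < l \<and> l \<le> c"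
  define M where "M = L G (c + 2 - k)"
  define N where "N = L G (c + 2 - l)"
  have LM: "M = lcs G (c + 1 - k)" unfolding M_def L_def by (simp add: numeral_2_eq_2)
  have LN: "N = lcs G (c + 1 - l)" unfolding N_def L_def by (simp add: numeral_2_eq_2)
  have nM: "M \<lhd> G" unfolding LM by (rule lcs_normal[OF assms(1)])
  have nN: "N \<lhd> G" unfolding LN by (rule lcs_normal[OF assms(1)])
  have "M \<subseteq> lcs G (Suc (c + 1 - l))" unfolding LM
    by (rule lcs_antimono[OF assms(1)]) (use kl in arith)
  then have MN: "M \<subseteq> generate G {x \<otimes>\<^bsub>G\<^esub> y \<otimes>\<^bsub>G\<^esub> inv\<^bsub>G\<^esub> x \<otimes>\<^bsub>G\<^esub> inv\<^bsub>G\<^esub> y | x y. x \<in> N \<and> y \<in> carrier G}"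
    by (simp add: LN)
  interpret lcsetup G M N "TYPE('p)"
    by (rule lcsetup.intro[OF assms(1,2) nM nN MN])
  have q1: "Q G c k = G Mod M" by (simp add: Q_def M_def)
  have q2: "Q G c l = G Mod N" by (simp add: Q_def N_def)
  have N': "L G (c + 2 - l) = N" by (simp only: N_def)
  have q3: "qmap G c l = rho" by (rule ext) (simp only: qmap_def rho_def N')
  have q4: "gmap G c l = sig" by (rule ext) (simp only: gmap_def sig_def N')
  show "(hom_image (Q G c k) (Q G c l) (qmap G c l) 2 :: ('a set list \<Rightarrow> 'p mod_ring) set)
             = hom_image G (Q G c l) (gmap G c l) 2"
    unfolding q1 q2 q3 q4 by (rule main)
qed


end
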